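(* If $\mathcal{X}=(X,\perp,R)$ is a monadic orthoframe, then $\mathcal{L}(\mathcal{X})=(\mathcal{L}(X,\perp),\exists_R)$ is a monadic ortholattice.
   Context: An orthoframe $(X,\perp)$ is a set with an irreflexive symmetric binary relation $\perp$; $A^\perp=\{x: a\perp x\ \forall a\in A\}$. $\mathcal{L}(X,\perp)=\{A\subseteq X: A=A^{\perp\perp}\}$ is a complete ortholattice with meets intersections, joins $(\bigcup A_i)^{\perp\perp}$, and orthocomplement $A\mapsto A^\perp$. $R[A]=\{y: x\,R\,y\text{ for some }x\in A\}$. A monadic orthoframe is $(X,\perp,R)$ with (M1) $\perp$ an orthogonality relation; (M2) $R$ reflexive and transitive; (M3) for each $x\in X$, $R[R[\{x\}]^\perp]\subseteq R[\{x\}]^\perp$. Define $\exists_RA=R[A]^{\perp\perp}$ for $A\in\mathcal{L}(X,\perp)$. A monadic ortholattice is an ortholattice with a unary $\exists$ satisfying (Q1) $\exists0=0$, (Q2) $p\le\exists p$, (Q3) $\exists(p\vee q)=\exists p\vee\exists q$, (Q4) $\exists\exists p=\exists p$, (Q5) $\exists(\exists p)^\perp=(\exists p)^\perp$. *)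

theory Defs
  imports Main
begin

definition orthoframe :: "'a set \<Rightarrow> ('a \<Rightarrow> 'a \<Rightarrow> bool) \<Rightarrow> bool" where
  "orthoframe X perp \<longleftrightarrow>
     (\<forall>x\<in>X. \<not> perp x x) \<and> (\<forall>x\<in>X. \<forall>y\<in>X. perp x y \<longrightarrow> perp y x)"

definition orth :: "'a set \<Rightarrow> ('a \<Rightarrow> 'a \<Rightarrow> bool) \<Rightarrow> 'a set \<Rightarrow> 'a set" where
  "orth X perp A = {x\<in>X. \<forall>a\<in>A. perp a x}"

definition closed_sets :: "'a set \<Rightarrow> ('a \<Rightarrow> 'a \<Rightarrow> bool) \<Rightarrow> 'a set set" where
  "closed_sets X perp = {A. A \<subseteq> X \<and> A = orth X perp (orth X perp A)}"

definition cjoin :: "'a set \<Rightarrow> ('a \<Rightarrow> 'a \<Rightarrow> bool) \<Rightarrow> 'a set \<Rightarrow> 'a set \<Rightarrow> 'a set" where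
  "cjoin X perp A B = orth X perp (orth X perp (A \<union> B))"

definition rimg :: "'a set \<Rightarrow> ('a \<Rightarrow> 'a \<Rightarrow> bool) \<Rightarrow> 'a set \<Rightarrow> 'a set" where
  "rimg X R A = {y\<in>X. \<exists>x\<in>A. R x y}"

definition monadic_orthoframe ::
  "'a set \<Rightarrow> ('a \<Rightarrow> 'a \<Rightarrow> bool) \<Rightarrow> ('a \<Rightarrow> 'a \<Rightarrow> bool) \<Rightarrow> bool" where
  "monadic_orthoframe X perp R \<longleftrightarrow>
     orthoframe X perp \<and>
     (\<forall>x\<in>X. R x x) \<and>
     (\<forall>x\<in>X. \<forall>y\<in>X. \<forall>z\<in>X. R x y \<longrightarrow> R y z \<longrightarrow> R x z) \<and>
     (\<forall>x\<in>X. rimg X R (orth X perp (rimg X R {x})) \<subseteq> orth X perp (rimg X R {x}))"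

definition exR :: "'a set \<Rightarrow> ('a \<Rightarrow> 'a \<Rightarrow> bool) \<Rightarrow> ('a \<Rightarrow> 'a \<Rightarrow> bool) \<Rightarrow> 'a set \<Rightarrow> 'a set" where
  "exR X perp R A = orth X perp (orth X perp (rimg X R A))"

definition ortholattice ::
  "'b set \<Rightarrow> ('b \<Rightarrow> 'b \<Rightarrow> bool) \<Rightarrow> ('b \<Rightarrow> 'b \<Rightarrow> 'b) \<Rightarrow> ('b \<Rightarrow> 'b \<Rightarrow> 'b)
     \<Rightarrow> ('b \<Rightarrow> 'b) \<Rightarrow> 'b \<Rightarrow> 'b \<Rightarrow> bool" where
  "ortholattice L le meet join compl zero one \<longleftrightarrow>
     \<comment> \<open>partial order\<close>
     (\<forall>a\<in>L. le a a) \<and>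
     (\<forall>a\<in>L. \<forall>b\<in>L. le a b \<longrightarrow> le b a \<longrightarrow> a = b) \<and>
     (\<forall>a\<in>L. \<forall>b\<in>L. \<forall>c\<in>L. le a b \<longrightarrow> le b c \<longrightarrow> le a c) \<and>
     \<comment> \<open>meet is the greatest lower bound\<close>
     (\<forall>a\<in>L. \<forall>b\<in>L. meet a b \<in> L \<and> le (meet a b) a \<and> le (meet a b) b \<and>
        (\<forall>c\<in>L. le c a \<longrightarrow> le c b \<longrightarrow> le c (meet a b))) \<and>
     \<comment> \<open>join is the least upper bound\<close>
     (\<forall>a\<in>L. \<forall>b\<in>L. join a b \<in> L \<and> le a (join a b) \<and> le b (join a b) \<and>
        (\<forall>c\<in>L. le a c \<longrightarrow> le b c \<longrightarrow> le (join a b) c)) \<and>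
     \<comment> \<open>bounds\<close>
     zero \<in> L \<and> one \<in> L \<and> (\<forall>a\<in>L. le zero a \<and> le a one) \<and>
     \<comment> \<open>orthocomplement\<close>
     (\<forall>a\<in>L. compl a \<in> L \<and> compl (compl a) = a \<and>
        meet a (compl a) = zero \<and> join a (compl a) = one) \<and>
     (\<forall>a\<in>L. \<forall>b\<in>L. le a b \<longrightarrow> le (compl b) (compl a))"

definition monadic_ortholattice ::
  "'b set \<Rightarrow> ('b \<Rightarrow> 'b \<Rightarrow> bool) \<Rightarrow> ('b \<Rightarrow> 'b \<Rightarrow> 'b) \<Rightarrow> ('b \<Rightarrow> 'b \<Rightarrow> 'b)
     \<Rightarrow> ('b \<Rightarrow> 'b) \<Rightarrow> 'b \<Rightarrow> 'b \<Rightarrow> ('b \<Rightarrow> 'b) \<Rightarrow> bool" where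
  "monadic_ortholattice L le meet join compl zero one ex \<longleftrightarrow>
     ortholattice L le meet join compl zero one \<and>
     (\<forall>p\<in>L. ex p \<in> L) \<and>
     ex zero = zero \<and>
     (\<forall>p\<in>L. le p (ex p)) \<and>
     (\<forall>p\<in>L. \<forall>q\<in>L. ex (join p q) = join (ex p) (ex q)) \<and>
     (\<forall>p\<in>L. ex (ex p) = ex p) \<and>
     (\<forall>p\<in>L. ex (compl (ex p)) = compl (ex p))"

end

theory Submission
  imports Defs
begin

lemma orth_sub: "orth X perp A \<subseteq> X" by (auto simp: orth_def)

lemma orth_anti: "A \<subseteq> B \<Longrightarrow> orth X perp B \<subseteq> orth X perp A"
  by (auto simp: orth_def)

lemma orth_ext:
  assumes "orthoframe X perp" "A \<subseteq> X"
  shows "A \<subseteq> orth X perp (orth X perp A)"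
  using assms by (auto simp: orth_def orthoframe_def)

lemma orth3:
  assumes "orthoframe X perp" "A \<subseteq> X"
  shows "orth X perp (orth X perp (orth X perp A)) = orth X perp A"
proof
  show "orth X perp A \<subseteq> orth X perp (orth X perp (orth X perp A))"
    using orth_ext[OF assms(1) orth_sub] .
next
  show "orth X perp (orth X perp (orth X perp A)) \<subseteq> orth X perp A"
    by (rule orth_anti[OF orth_ext[OF assms]])
qed

lemma orth_closed: "orthoframe X perp \<Longrightarrow> A \<subseteq> X \<Longrightarrow> orth X perp A \<in> closed_sets X perp"
  unfolding closed_sets_def using orth3[of X perp A] orth_sub[of X perp A] by simp

lemma orth_empty: "orthoframe X perp \<Longrightarrow> orth X perp X = {}"
  by (auto simp: orth_def orthoframe_def)

lemma orth_empty2: "orth X perp {} = X"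
  by (auto simp: orth_def)

lemma orth_Un: "orth X perp (A \<union> B) = orth X perp A \<inter> orth X perp B"
  by (auto simp: orth_def)

lemma rimg_sub: "rimg X R A \<subseteq> X" by (auto simp: rimg_def)

lemma rimg_ext: "\<forall>x\<in>X. R x x \<Longrightarrow> A \<subseteq> X \<Longrightarrow> A \<subseteq> rimg X R A"
  by (auto simp: rimg_def)

lemma rimg_mono: "A \<subseteq> B \<Longrightarrow> rimg X R A \<subseteq> rimg X R B"
  by (auto simp: rimg_def)

lemma rimg_Un: "rimg X R (A \<union> B) = rimg X R A \<union> rimg X R B"
  by (auto simp: rimg_def)

lemma keyK:
  assumes M: "monadic_orthoframe X perp R" and A: "A \<subseteq> X"
  shows "rimg X R (orth X perp (rimg X R A)) \<subseteq> orth X perp (rimg X R A)"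
proof
  fix y assume y: "y \<in> rimg X R (orth X perp (rimg X R A))"
  then obtain z where z: "z \<in> orth X perp (rimg X R A)" "R z y" "y \<in> X"
    by (auto simp: rimg_def)
  show "y \<in> orth X perp (rimg X R A)"
    unfolding orth_def
  proof (intro CollectI conjI ballI)
    show "y \<in> X" by fact
    fix w assume w: "w \<in> rimg X R A"
    then obtain a where a: "a \<in> A" "R a w" "w \<in> X" by (auto simp: rimg_def)
    have aX: "a \<in> X" using a A by auto
    have "rimg X R {a} \<subseteq> rimg X R A" using a by (auto simp: rimg_def)
    hence "z \<in> orth X perp (rimg X R {a})" using z(1) by (auto simp: orth_def)
    hence "y \<in> rimg X R (orth X perp (rimg X R {a}))" using z by (auto simp: rimg_def)
    hence "y \<in> orth X perp (rimg X R {a})" using M aX unfolding monadic_orthoframe_def by blast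
    moreover have "w \<in> rimg X R {a}" using a by (auto simp: rimg_def)
    ultimately show "perp w y" by (auto simp: orth_def)
  qed
qed

lemma keyL:
  assumes M: "monadic_orthoframe X perp R" and A: "A \<subseteq> X"
  shows "rimg X R (orth X perp (orth X perp A)) \<subseteq> orth X perp (orth X perp (rimg X R A))"
proof
  have O: "orthoframe X perp" and refl: "\<forall>x\<in>X. R x x" using M by (auto simp: monadic_orthoframe_def)
  fix y assume "y \<in> rimg X R (orth X perp (orth X perp A))"
  then obtain x where x: "x \<in> orth X perp (orth X perp A)" "R x y" "y \<in> X"
    by (auto simp: rimg_def)
  have xX: "x \<in> X" using x by (auto simp: orth_def)
  show "y \<in> orth X perp (orth X perp (rimg X R A))"
    unfolding orth_def[of X perp "orth X perp _"]
  proof (intro CollectI conjI ballI)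
    show "y \<in> X" by fact
    fix z assume z: "z \<in> orth X perp (rimg X R A)"
    have zX: "z \<in> X" using z by (auto simp: orth_def)
    have "rimg X R {z} \<subseteq> rimg X R (orth X perp (rimg X R A))" using z by (intro rimg_mono) auto
    also have "\<dots> \<subseteq> orth X perp (rimg X R A)" by (rule keyK[OF M A])
    also have "\<dots> \<subseteq> orth X perp A" by (rule orth_anti[OF rimg_ext[of X R A, OF refl A]])
    finally have "rimg X R {z} \<subseteq> orth X perp A" .
    hence "\<forall>w\<in>rimg X R {z}. perp w x" using x(1) by (auto simp: orth_def)
    hence "x \<in> orth X perp (rimg X R {z})" using xX by (auto simp: orth_def)
    hence "y \<in> rimg X R (orth X perp (rimg X R {z}))" using x by (auto simp: rimg_def)
    hence "y \<in> orth X perp (rimg X R {z})" using M zX unfolding monadic_orthoframe_def by blast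
    moreover have "z \<in> rimg X R {z}" using refl zX by (auto simp: rimg_def)
    ultimately show "perp z y" by (auto simp: orth_def)
  qed
qed

lemma exR_cl:
  assumes M: "monadic_orthoframe X perp R" and A: "A \<subseteq> X"
  shows "exR X perp R (orth X perp (orth X perp A)) = exR X perp R A"
proof -
  have O: "orthoframe X perp" and refl: "\<forall>x\<in>X. R x x" using M by (auto simp: monadic_orthoframe_def)
  have "orth X perp (orth X perp (rimg X R (orth X perp (orth X perp A))))
     \<subseteq> orth X perp (orth X perp (orth X perp (orth X perp (rimg X R A))))"
    by (intro orth_anti keyL[OF M A])
  also have "\<dots> = orth X perp (orth X perp (rimg X R A))" using orth3[OF O orth_sub] by simp
  finally have 1: "exR X perp R (orth X perp (orth X perp A)) \<subseteq> exR X perp R A" unfolding exR_def .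
  have "rimg X R A \<subseteq> rimg X R (orth X perp (orth X perp A))"
    by (intro rimg_mono orth_ext[OF O A])
  hence "exR X perp R A \<subseteq> exR X perp R (orth X perp (orth X perp A))"
    unfolding exR_def by (intro orth_anti)
  with 1 show ?thesis by blast
qed

theorem mainTheorem18:
  fixes X :: "'a set" and perp R :: "'a \<Rightarrow> 'a \<Rightarrow> bool"
  assumes "monadic_orthoframe X perp R"
  shows "monadic_ortholattice (closed_sets X perp) (\<subseteq>) (\<inter>) (cjoin X perp)
           (orth X perp) (orth X perp X) X (exR X perp R)"
proof -
  note M = assms
  have O: "orthoframe X perp" and refl: "\<forall>x\<in>X. R x x"
    and trans: "\<forall>x\<in>X. \<forall>y\<in>X. \<forall>z\<in>X. R x y \<longrightarrow> R y z \<longrightarrow> R x z"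
    using M unfolding monadic_orthoframe_def by blast+
  let ?L = "closed_sets X perp"
  let ?o = "orth X perp"
  have clX: "A \<in> ?L \<Longrightarrow> A \<subseteq> X" for A by (simp add: closed_sets_def)
  have clE: "A \<in> ?L \<Longrightarrow> ?o (?o A) = A" for A by (simp add: closed_sets_def)
  have clI: "A \<subseteq> X \<Longrightarrow> ?o (?o A) = A \<Longrightarrow> A \<in> ?L" for A by (simp add: closed_sets_def)
  have z: "?o X = {}" by (rule orth_empty[OF O])
  have ocl: "A \<subseteq> X \<Longrightarrow> ?o A \<in> ?L" for A by (rule orth_closed[OF O])
  have meet: "A \<inter> B \<in> ?L" if "A \<in> ?L" "B \<in> ?L" for A B
  proof -
    have "?o (?o (A \<inter> B)) \<subseteq> ?o (?o A)" "?o (?o (A \<inter> B)) \<subseteq> ?o (?o B)"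
      by (intro orth_anti; auto)+
    moreover have "A \<inter> B \<subseteq> ?o (?o (A \<inter> B))" using that clX by (intro orth_ext[OF O]) blast
    moreover have "A \<inter> B \<subseteq> X" using that clX by blast
    ultimately show ?thesis using that clE by (intro clI) auto
  qed
  have joinlub: "cjoin X perp A B \<subseteq> C" if "A \<subseteq> C" "B \<subseteq> C" "C \<in> ?L" for A B C
  proof -
    have "?o (?o (A \<union> B)) \<subseteq> ?o (?o C)" using that by (intro orth_anti) auto
    thus ?thesis using that by (auto simp: clX clE cjoin_def)
  qed
  have joinub: "A \<union> B \<subseteq> cjoin X perp A B" if "A \<in> ?L" "B \<in> ?L" for A B
    unfolding cjoin_def using that by (intro orth_ext[OF O]) (auto simp: clX clE)
  have compl1: "A \<inter> ?o A = {}" for A using O by (auto simp: orth_def orthoframe_def)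
  have compl2: "cjoin X perp A (?o A) = X" if "A \<in> ?L" for A
  proof -
    have "?o (A \<union> ?o A) = ?o A \<inter> ?o (?o A)" by (auto simp: orth_def)
    also have "\<dots> = {}" using that compl1[of "?o A"] by (auto simp: clX clE)
    finally show ?thesis by (simp add: cjoin_def orth_empty2)
  qed
  have o1: "\<forall>a\<in>?L. a \<subseteq> a" by simp
  have o2: "\<forall>a\<in>?L. \<forall>b\<in>?L. a \<subseteq> b \<longrightarrow> b \<subseteq> a \<longrightarrow> a = b" by blast
  have o3: "\<forall>a\<in>?L. \<forall>b\<in>?L. \<forall>c\<in>?L. a \<subseteq> b \<longrightarrow> b \<subseteq> c \<longrightarrow> a \<subseteq> c" by blast
  have o4: "\<forall>a\<in>?L. \<forall>b\<in>?L. a \<inter> b \<in> ?L \<and> a \<inter> b \<subseteq> a \<and> a \<inter> b \<subseteq> b \<and>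
        (\<forall>c\<in>?L. c \<subseteq> a \<longrightarrow> c \<subseteq> b \<longrightarrow> c \<subseteq> a \<inter> b)" using meet by blast
  have o5: "\<forall>a\<in>?L. \<forall>b\<in>?L. cjoin X perp a b \<in> ?L \<and> a \<subseteq> cjoin X perp a b \<and> b \<subseteq> cjoin X perp a b \<and>
        (\<forall>c\<in>?L. a \<subseteq> c \<longrightarrow> b \<subseteq> c \<longrightarrow> cjoin X perp a b \<subseteq> c)"
  proof (intro ballI conjI)
    fix a b assume a: "a \<in> ?L" and b: "b \<in> ?L"
    show "cjoin X perp a b \<in> ?L" unfolding cjoin_def by (rule ocl[OF orth_sub])
    show "a \<subseteq> cjoin X perp a b" "b \<subseteq> cjoin X perp a b" using joinub[OF a b] by auto
    show "a \<subseteq> c \<longrightarrow> b \<subseteq> c \<longrightarrow> cjoin X perp a b \<subseteq> c" if "c \<in> ?L" for c using joinlub that by blast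
  qed
  have o6: "?o X \<in> ?L" by (rule ocl) simp
  have o7: "X \<in> ?L" using ocl[of "{}"] by (simp add: orth_empty2)
  have o8: "\<forall>a\<in>?L. ?o X \<subseteq> a \<and> a \<subseteq> X" using clX by (simp add: z)
  have o9: "\<forall>a\<in>?L. ?o a \<in> ?L \<and> ?o (?o a) = a \<and> a \<inter> ?o a = ?o X \<and> cjoin X perp a (?o a) = X"
  proof (intro ballI conjI)
    fix a assume a: "a \<in> ?L"
    show "?o a \<in> ?L" by (rule ocl[OF clX[OF a]])
    show "?o (?o a) = a" using a by (rule clE)
    show "a \<inter> ?o a = ?o X" by (simp add: z compl1)
    show "cjoin X perp a (?o a) = X" by (rule compl2[OF a])
  qed
  have o10: "\<forall>a\<in>?L. \<forall>b\<in>?L. a \<subseteq> b \<longrightarrow> ?o b \<subseteq> ?o a" using orth_anti by blast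
  have OL: "ortholattice ?L (\<subseteq>) (\<inter>) (cjoin X perp) ?o (?o X) X"
    unfolding ortholattice_def using o1 o2 o3 o4 o5 o6 o7 o8 o9 o10 by blast
  have exL: "exR X perp R p \<in> ?L" for p unfolding exR_def by (rule ocl[OF orth_sub])
  have ex0: "exR X perp R (?o X) = ?o X"
    by (simp add: z exR_def rimg_def orth_empty2)
  have ex2: "p \<subseteq> exR X perp R p" if "p \<in> ?L" for p
  proof -
    have "?o (?o p) \<subseteq> exR X perp R p" unfolding exR_def
      using that by (intro orth_anti rimg_ext[of X R, OF refl]) (auto simp: clX clE)
    thus ?thesis using that by (auto simp: clX clE)
  qed
  have ex3: "exR X perp R (cjoin X perp p q) = cjoin X perp (exR X perp R p) (exR X perp R q)"
    if "p \<in> ?L" "q \<in> ?L" for p q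
  proof -
    have "exR X perp R (cjoin X perp p q) = ?o (?o (rimg X R p \<union> rimg X R q))"
      unfolding cjoin_def using that
      by (subst exR_cl[OF M]) (auto simp: clX clE exR_def rimg_Un)
    also have "\<dots> = cjoin X perp (exR X perp R p) (exR X perp R q)"
    proof -
      show ?thesis unfolding cjoin_def exR_def orth_Un orth3[OF O rimg_sub] ..
    qed
    finally show ?thesis .
  qed
  have RR: "rimg X R (rimg X R p) = rimg X R p" if "p \<subseteq> X" for p
  proof
    show "rimg X R (rimg X R p) \<subseteq> rimg X R p" using trans that
      by (auto simp: rimg_def)
    show "rimg X R p \<subseteq> rimg X R (rimg X R p)" by (rule rimg_ext[of X R, OF refl rimg_sub])
  qed
  have ex4: "exR X perp R (exR X perp R p) = exR X perp R p" if "p \<in> ?L" for p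
  proof -
    have "exR X perp R (exR X perp R p) = exR X perp R (rimg X R p)"
      unfolding exR_def[of X perp R p] by (rule exR_cl[OF M rimg_sub])
    also have "\<dots> = exR X perp R p" using that RR by (auto simp: clX clE exR_def)
    finally show ?thesis .
  qed
  have ex5: "exR X perp R (?o (exR X perp R p)) = ?o (exR X perp R p)" if "p \<in> ?L" for p
  proof -
    have pX: "p \<subseteq> X" using that by (auto simp: clX clE)
    have e1: "?o (exR X perp R p) = ?o (rimg X R p)" unfolding exR_def using orth3[OF O rimg_sub] by simp
    have e2: "rimg X R (?o (rimg X R p)) = ?o (rimg X R p)"
      using keyK[OF M pX] rimg_ext[of X R, OF refl orth_sub] by blast
    have "exR X perp R (?o (exR X perp R p)) = ?o (?o (rimg X R (?o (rimg X R p))))"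
      unfolding exR_def orth3[OF O rimg_sub] ..
    also have "\<dots> = ?o (?o (?o (rimg X R p)))" by (simp only: e2)
    also have "\<dots> = ?o (rimg X R p)" by (rule orth3[OF O rimg_sub])
    finally show ?thesis using e1 by simp
  qed
  show ?thesis unfolding monadic_ortholattice_def
  proof (intro conjI)
    show "ortholattice ?L (\<subseteq>) (\<inter>) (cjoin X perp) ?o (?o X) X" by (rule OL)
    show "\<forall>p\<in>?L. exR X perp R p \<in> ?L" using exL by blast
    show "exR X perp R (?o X) = ?o X" by (rule ex0)
    show "\<forall>p\<in>?L. p \<subseteq> exR X perp R p" using ex2 by blast
    show "\<forall>p\<in>?L. \<forall>q\<in>?L. exR X perp R (cjoin X perp p q) = cjoin X perp (exR X perp R p) (exR X perp R q)"
      using ex3 by blast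
    show "\<forall>p\<in>?L. exR X perp R (exR X perp R p) = exR X perp R p" using ex4 by blast
    show "\<forall>p\<in>?L. exR X perp R (?o (exR X perp R p)) = ?o (exR X perp R p)" using ex5 by blast
  qed
qed

end
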